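(* Fix $l\in S^{d-1}$, $L'>R$ and $L=3L'$. Let $w:\mathbb R_+\to\mathbb R^d$ be a continuous path with $w(0)=0$ and $\limsup_{t\to\infty}\frac{l\cdot w(t)}{t}>0$. Then there exists an integer $h\ge1$ such that for all integers $\alpha\ge2$, $$\limsup_{M\to\infty}\frac1{M+1}\sum_{m=0}^M\mathbb 1_{\{h^{(m)}_\alpha(w)\le h\}}\ge\frac13 .$$
   Context: All quantities below are evaluated along the path $w$ (infimum of the empty set is $+\infty$). For $a<b$: open slab $\mathcal S_{(a,b)}=\{x:a<x\cdot l<b\}$, closed slab $\bar{\mathcal S}_{(a,b)}=\{x:a\le x\cdot l\le b\}$. For a set $A$: entrance time $H_A=\inf\{t\ge0:w(t)\in A\}$, exit time $T_A=\inf\{t\ge0:w(t)\notin A\}$; $T_u=\inf\{t\ge0:l\cdot w(t)\ge u\}$; $\theta_t$ denotes the time shift $(\theta_tw)(s)=w(t+s)$. For integer $m\ge0$: $R^{(m)}_1=H_{\bar{\mathcal S}_{(mL+L',mL+2L')}}$, $S^{(m)}_1=T_{\mathcal S_{(mL,(m+1)L)}}\circ\theta_{R^{(m)}_1}+R^{(m)}_1$, and for $k\ge2$, $R^{(m)}_k=R^{(m)}_1\circ\theta_{S^{(m)}_{k-1}}+S^{(m)}_{k-1}$, $S^{(m)}_k=S^{(m)}_1\circ\theta_{S^{(m)}_{k-1}}+S^{(m)}_{k-1}$. For integer $\alpha\ge2$: $k^{(m)}_\alpha=\max\{k\ge1:R^{(m)}_k+1\le S^{(m)}_k<T_{(m+\alpha)L}\}$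 if $T_{(m+\alpha)L}<\infty$ and this set is nonempty, and $k^{(m)}_\alpha=0$ otherwise; $h^{(m)}_\alpha=S^{(m)}_{k^{(m)}_\alpha}-T_{mL}$ if $T_{(m+\alpha)L}<\infty$ (with the convention $S^{(m)}_0=T_{mL}$), and $h^{(m)}_\alpha=\infty$ otherwise. Here $R>0$ is a fixed positive constant. *)

theory Defs
  imports "HOL-Analysis.Analysis"
begin

text \<open>Paths are functions real => 'a; only nonnegative times matter.
  Times are extended reals; the infimum of the empty set is +infinity.\<close>

definition hit_time :: "(real \<Rightarrow> 'a) \<Rightarrow> 'a set \<Rightarrow> ereal" where
  "hit_time w A = Inf (ereal ` {t. 0 \<le> t \<and> w t \<in> A})"

definition exit_time :: "(real \<Rightarrow> 'a) \<Rightarrow> 'a set \<Rightarrow> ereal" where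
  "exit_time w A = Inf (ereal ` {t. 0 \<le> t \<and> w t \<notin> A})"

definition level_time :: "'a::real_inner \<Rightarrow> (real \<Rightarrow> 'a) \<Rightarrow> real \<Rightarrow> ereal" where
  "level_time l w u = Inf (ereal ` {t. 0 \<le> t \<and> l \<bullet> w t \<ge> u})"

definition shift :: "real \<Rightarrow> (real \<Rightarrow> 'a) \<Rightarrow> (real \<Rightarrow> 'a)" where
  "shift t w = (\<lambda>s. w (t + s))"

definition after :: "ereal \<Rightarrow> ((real \<Rightarrow> 'a) \<Rightarrow> ereal) \<Rightarrow> (real \<Rightarrow> 'a) \<Rightarrow> ereal" where
  "after tau F w = (case tau of ereal t \<Rightarrow> F (shift t w) + ereal t | _ \<Rightarrow> \<infinity>)"

definition open_slab :: "'a::real_inner \<Rightarrow> real \<Rightarrow> real \<Rightarrow> 'a set" where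
  "open_slab l a b = {x. a < x \<bullet> l \<and> x \<bullet> l < b}"

definition closed_slab :: "'a::real_inner \<Rightarrow> real \<Rightarrow> real \<Rightarrow> 'a set" where
  "closed_slab l a b = {x. a \<le> x \<bullet> l \<and> x \<bullet> l \<le> b}"

definition R1 :: "'a::real_inner \<Rightarrow> real \<Rightarrow> real \<Rightarrow> nat \<Rightarrow> (real \<Rightarrow> 'a) \<Rightarrow> ereal" where
  "R1 l L L' m w = hit_time w (closed_slab l (real m * L + L') (real m * L + 2 * L'))"

definition S1 :: "'a::real_inner \<Rightarrow> real \<Rightarrow> real \<Rightarrow> nat \<Rightarrow> (real \<Rightarrow> 'a) \<Rightarrow> ereal" where
  "S1 l L L' m w = after (R1 l L L' m w)
      (\<lambda>v. exit_time v (open_slab l (real m * L) (real (m + 1) * L))) w"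

text \<open>Sseq n = S^{(m)}_{n+1}, Rseq n = R^{(m)}_{n+1}.\<close>
primrec Sseq :: "'a::real_inner \<Rightarrow> real \<Rightarrow> real \<Rightarrow> nat \<Rightarrow> (real \<Rightarrow> 'a) \<Rightarrow> nat \<Rightarrow> ereal" where
  "Sseq l L L' m w 0 = S1 l L L' m w"
| "Sseq l L L' m w (Suc n) = after (Sseq l L L' m w n) (S1 l L L' m) w"

primrec Rseq :: "'a::real_inner \<Rightarrow> real \<Rightarrow> real \<Rightarrow> nat \<Rightarrow> (real \<Rightarrow> 'a) \<Rightarrow> nat \<Rightarrow> ereal" where
  "Rseq l L L' m w 0 = R1 l L L' m w"
| "Rseq l L L' m w (Suc n) = after (Sseq l L L' m w n) (R1 l L L' m) w"

definition Rk :: "'a::real_inner \<Rightarrow> real \<Rightarrow> real \<Rightarrow> nat \<Rightarrow> (real \<Rightarrow> 'a) \<Rightarrow> nat \<Rightarrow> ereal" where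
  "Rk l L L' m w k = Rseq l L L' m w (k - 1)"

definition Sk :: "'a::real_inner \<Rightarrow> real \<Rightarrow> real \<Rightarrow> nat \<Rightarrow> (real \<Rightarrow> 'a) \<Rightarrow> nat \<Rightarrow> ereal" where
  "Sk l L L' m w k = Sseq l L L' m w (k - 1)"

definition k_alpha :: "'a::real_inner \<Rightarrow> real \<Rightarrow> real \<Rightarrow> nat \<Rightarrow> nat \<Rightarrow> (real \<Rightarrow> 'a) \<Rightarrow> nat" where
  "k_alpha l L L' m \<alpha> w =
     (let T = level_time l w (real (m + \<alpha>) * L);
          K = {k. 1 \<le> k \<and> Rk l L L' m w k + 1 \<le> Sk l L L' m w k \<and> Sk l L L' m w k < T}
      in if T < \<infinity> \<and> K \<noteq> {} then Max K else 0)"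

definition h_alpha :: "'a::real_inner \<Rightarrow> real \<Rightarrow> real \<Rightarrow> nat \<Rightarrow> nat \<Rightarrow> (real \<Rightarrow> 'a) \<Rightarrow> ereal" where
  "h_alpha l L L' m \<alpha> w =
     (if level_time l w (real (m + \<alpha>) * L) < \<infinity> then
        (let k = k_alpha l L L' m \<alpha> w;
             Sk' = (if k = 0 then level_time l w (real m * L) else Sk l L L' m w k)
         in Sk' - level_time l w (real m * L))
      else \<infinity>)"

end

theory Submission
  imports Defs
begin


lemma hit_time_nonneg: "hit_time w A \<ge> 0"
  unfolding hit_time_def by (rule Inf_greatest) auto

lemma exit_time_nonneg: "exit_time w A \<ge> 0"
  unfolding exit_time_def by (rule Inf_greatest) auto

lemma level_time_nonneg: "level_time l w u \<ge> 0"
  unfolding level_time_def by (rule Inf_greatest) auto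

lemma level_time_le: "0 \<le> t \<Longrightarrow> l \<bullet> w t \<ge> u \<Longrightarrow> level_time l w u \<le> ereal t"
  unfolding level_time_def by (rule Inf_lower) auto

lemma level_time_mono: "u \<le> v \<Longrightarrow> level_time l w u \<le> level_time l w v"
  unfolding level_time_def by (rule Inf_superset_mono) auto

lemma after_ge: assumes "\<And>v. F v \<ge> 0" shows "after tau F w \<ge> tau"
proof (cases tau)
  case (real r) then show ?thesis using assms[of "shift r w"] unfolding after_def
    by (cases "F (shift r w)") auto
qed (auto simp: after_def)

lemma R1_nonneg: "R1 l L L' m w \<ge> 0"
  unfolding R1_def by (rule hit_time_nonneg)

lemma S1_ge: "S1 l L L' m w \<ge> R1 l L L' m w"
  unfolding S1_def by (rule after_ge) (rule exit_time_nonneg)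

lemma S1_nonneg: "S1 l L L' m w \<ge> 0"
  using S1_ge R1_nonneg order_trans by blast

lemma shift_shift: "shift r (shift s w) = shift (r + s) w"
  unfolding shift_def by (auto simp: algebra_simps)

lemma Sseq_after:
  "Sseq l L L' m w n = after (Rseq l L L' m w n)
     (\<lambda>v. exit_time v (open_slab l (real m * L) (real (m + 1) * L))) w"
proof (cases n)
  case 0 then show ?thesis by (simp add: S1_def)
next
  case (Suc k)
  show ?thesis
  proof (cases "Sseq l L L' m w k")
    case (real s)
    show ?thesis
    proof (cases "R1 l L L' m (shift s w)")
      case (real r)
      then show ?thesis using \<open>Sseq l L L' m w k = ereal s\<close> Suc
        by (simp add: after_def S1_def shift_shift add.assoc)
    qed (use Suc real in \<open>simp_all add: after_def S1_def\<close>)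
  qed (use Suc in \<open>simp_all add: after_def\<close>)
qed

lemma Sseq_ge_Rseq: "Sseq l L L' m w n \<ge> Rseq l L L' m w n"
  unfolding Sseq_after by (rule after_ge) (rule exit_time_nonneg)

lemma Rseq_Suc_ge: "Rseq l L L' m w (Suc n) \<ge> Sseq l L L' m w n"
  by simp (rule after_ge, rule R1_nonneg)

lemma Rseq_nonneg: "Rseq l L L' m w n \<ge> 0"
proof (induction n)
  case 0 then show ?case using R1_nonneg by simp
next
  case (Suc n) then show ?case using Rseq_Suc_ge[of l L L' m w n] Sseq_ge_Rseq[of l L L' m w n]
    by (meson order_trans)
qed

lemma Rseq_mono: "n \<le> n' \<Longrightarrow> Rseq l L L' m w n \<le> Rseq l L L' m w n'"
proof (induction n' rule: dec_induct)
  case (step k) then show ?case using Rseq_Suc_ge[of l L L' m w k] Sseq_ge_Rseq[of l L L' m w k]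
    by (meson order_trans)
qed simp

lemma Sseq_le_Rseq: "n < n' \<Longrightarrow> Sseq l L L' m w n \<le> Rseq l L L' m w n'"
  using Rseq_Suc_ge[of l L L' m w n] Rseq_mono[of "Suc n" n' l L L' m w] by (meson Suc_leI order_trans)

lemma in_slab:
  assumes "Rseq l L L' m w n = ereal r" "r \<le> \<tau>" "ereal \<tau> < Sseq l L L' m w n"
  shows "real m * L < w \<tau> \<bullet> l \<and> w \<tau> \<bullet> l < real (m + 1) * L"
proof (rule ccontr)
  assume nin: "\<not> ?thesis"
  have "Sseq l L L' m w n = exit_time (shift r w) (open_slab l (real m * L) (real (m + 1) * L)) + ereal r"
    using assms(1) by (simp add: Sseq_after after_def)
  moreover have "exit_time (shift r w) (open_slab l (real m * L) (real (m + 1) * L)) \<le> ereal (\<tau> - r)"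
    unfolding exit_time_def using nin assms(2) by (intro Inf_lower) (auto simp: shift_def open_slab_def)
  ultimately have "Sseq l L L' m w n \<le> ereal (\<tau> - r) + ereal r"
    by (metis add_right_mono)
  then show False using assms(3) by simp
qed

lemma slab_unique:
  assumes "L > 0" "real m * L < x" "x < real (m + 1) * L" "real m' * L < x" "x < real (m' + 1) * L"
  shows "m = m'"
proof -
  have "real m < real (m' + 1)" using assms mult_less_cancel_right_pos[of L] by (meson less_trans)
  moreover have "real m' < real (m + 1)" using assms mult_less_cancel_right_pos[of L] by (meson less_trans)
  ultimately show ?thesis by linarith
qed

lemma G_inj_aux:
  assumes L: "L > 0"
    and g1: "Rseq l L L' m w n + 1 \<le> Sseq l L L' m w n"
    and g2: "Rseq l L L' m' w n' + 1 \<le> Sseq l L L' m' w n'"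
    and r: "Rseq l L L' m w n = ereal r" and r': "Rseq l L L' m' w n' = ereal r'"
    and le: "r \<le> r'" "r' < r + 1"
  shows "m = m' \<and> n = n'"
proof -
  have "ereal r' < ereal r + 1" using le(2) by simp
  then have s1: "ereal r' < Sseq l L L' m w n" using g1 unfolding r by (rule less_le_trans)
  have "ereal r' < ereal r' + 1" by simp
  then have s2: "ereal r' < Sseq l L L' m' w n'" using g2 unfolding r' by (rule less_le_trans)
  have "m = m'" using in_slab[OF r le(1) s1] in_slab[OF r' order_refl s2] slab_unique[OF L] by blast
  moreover have "n = n'"
  proof (rule ccontr)
    assume "n \<noteq> n'"
    then consider "n < n'" | "n' < n" by linarith
    then show False
    proof cases
      case 1 then have "Sseq l L L' m w n \<le> Rseq l L L' m w n'" by (rule Sseq_le_Rseq)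
      then show False using s1 r' \<open>m = m'\<close> by simp
    next
      case 2 then have "Sseq l L L' m w n' \<le> Rseq l L L' m w n" by (rule Sseq_le_Rseq)
      then have "ereal r' + 1 \<le> ereal r" using g2 r r' \<open>m = m'\<close> by (metis order_trans)
      then show False using le by simp
    qed
  qed
  ultimately show ?thesis by blast
qed

lemma G_card:
  assumes L: "L > 0"
  shows "finite {(m,n). Rseq l L L' m w n + 1 \<le> Sseq l L L' m w n \<and> Sseq l L L' m w n \<le> ereal t}
    \<and> card {(m,n). Rseq l L L' m w n + 1 \<le> Sseq l L L' m w n \<and> Sseq l L L' m w n \<le> ereal t}
        \<le> nat \<lfloor>t\<rfloor> + 1"
proof -
  define G where "G = {(m,n). Rseq l L L' m w n + 1 \<le> Sseq l L L' m w n \<and> Sseq l L L' m w n \<le> ereal t}"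
  define \<phi> where "\<phi> = (\<lambda>(m,n). nat \<lfloor>real_of_ereal (Rseq l L L' m w n)\<rfloor>)"
  have fin: "Rseq l L L' m w n = ereal (real_of_ereal (Rseq l L L' m w n))
      \<and> 0 \<le> real_of_ereal (Rseq l L L' m w n) \<and> real_of_ereal (Rseq l L L' m w n) + 1 \<le> t"
    if "(m,n) \<in> G" for m n
  proof -
    have a: "Rseq l L L' m w n + 1 \<le> ereal t" using that unfolding G_def by auto
    have b: "Rseq l L L' m w n \<ge> 0" by (rule Rseq_nonneg)
    from a b show ?thesis by (cases "Rseq l L L' m w n") auto
  qed
  have img: "\<phi> ` G \<subseteq> {0..nat \<lfloor>t\<rfloor>}"
  proof
    fix x assume "x \<in> \<phi> ` G"
    then obtain m n where mn: "(m,n) \<in> G" "x = \<phi> (m,n)" by auto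
    from fin[OF mn(1)] show "x \<in> {0..nat \<lfloor>t\<rfloor>}" unfolding mn(2) \<phi>_def
      by (auto intro!: nat_mono floor_mono)
  qed
  have inj: "inj_on \<phi> G"
  proof (rule inj_onI)
    fix x y assume x: "x \<in> G" and y: "y \<in> G" and eq: "\<phi> x = \<phi> y"
    obtain m n where xx: "x = (m,n)" by (cases x)
    obtain m' n' where yy: "y = (m',n')" by (cases y)
    define r where "r = real_of_ereal (Rseq l L L' m w n)"
    define r' where "r' = real_of_ereal (Rseq l L L' m' w n')"
    have fx: "Rseq l L L' m w n = ereal r" "0 \<le> r" using fin[of m n] x xx r_def by auto
    have fy: "Rseq l L L' m' w n' = ereal r'" "0 \<le> r'" using fin[of m' n'] y yy r'_def by auto
    have g1: "Rseq l L L' m w n + 1 \<le> Sseq l L L' m w n" using x xx G_def by auto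
    have g2: "Rseq l L L' m' w n' + 1 \<le> Sseq l L L' m' w n'" using y yy G_def by auto
    have fl: "\<lfloor>r\<rfloor> = \<lfloor>r'\<rfloor>" using eq fx fy unfolding xx yy \<phi>_def r_def[symmetric] r'_def[symmetric]
      by (simp add: nat_eq_iff)
    have "r \<le> r' \<or> r' \<le> r" by linarith
    then show "x = y"
    proof
      assume "r \<le> r'"
      moreover have "r' < r + 1" using fl by linarith
      ultimately show ?thesis using G_inj_aux[OF L g1 g2 fx(1) fy(1)] xx yy by simp
    next
      assume "r' \<le> r"
      moreover have "r < r' + 1" using fl by linarith
      ultimately show ?thesis using G_inj_aux[OF L g2 g1 fy(1) fx(1)] xx yy by simp
    qed
  qed
  have "finite G" using inj_on_finite[OF inj img] by simp
  moreover have "card G \<le> nat \<lfloor>t\<rfloor> + 1"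
    using card_inj_on_le[OF inj img] by simp
  ultimately show ?thesis unfolding G_def by blast
qed

lemma bad_fact:
  assumes L: "L > 0" and h: "0 \<le> h"
    and T: "level_time l w (real (m + \<alpha>) * L) = ereal T'"
    and Tm: "level_time l w (real m * L) = ereal Tm"
    and bad: "\<not> (h_alpha l L L' m \<alpha> w \<le> ereal h)"
  shows "\<exists>s. Sseq l L L' m w (k_alpha l L L' m \<alpha> w - 1) = ereal s \<and> s < T' \<and> h < s - Tm
     \<and> Rseq l L L' m w (k_alpha l L L' m \<alpha> w - 1) + 1 \<le> ereal s"
proof -
  define k where "k = k_alpha l L L' m \<alpha> w"
  define K where "K = {k. 1 \<le> k \<and> Rk l L L' m w k + 1 \<le> Sk l L L' m w k \<and> Sk l L L' m w k < ereal T'}"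
  have ha: "h_alpha l L L' m \<alpha> w = (if k = 0 then ereal Tm else Sk l L L' m w k) - ereal Tm"
    unfolding h_alpha_def k_def using T Tm by simp
  have k0: "k \<noteq> 0"
  proof
    assume "k = 0" then have "h_alpha l L L' m \<alpha> w = 0" using ha by simp
    then show False using bad h by simp
  qed
  have Tinf: "ereal T' < \<infinity>" by simp
  have kdef: "k = (if K \<noteq> {} then Max K else 0)"
    unfolding k_def k_alpha_def K_def Let_def T by (simp only: Tinf simp_thms)
  have Kne: "K \<noteq> {}" using k0 kdef by (auto split: if_splits)
  define G where "G = {(m,n). Rseq l L L' m w n + 1 \<le> Sseq l L L' m w n \<and> Sseq l L L' m w n \<le> ereal T'}"
  have finG: "finite G" using G_card[OF L] unfolding G_def by blast
  have "K \<subseteq> (\<lambda>p. Suc (snd p)) ` G"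
  proof
    fix j assume "j \<in> K"
    then have "(m, j - 1) \<in> G" "j = Suc (j - 1)" unfolding K_def G_def Rk_def Sk_def by auto
    then show "j \<in> (\<lambda>p. Suc (snd p)) ` G" by force
  qed
  then have finK: "finite K" using finG finite_surj by blast
  have "k \<in> K" using kdef Kne Max_in[OF finK Kne] by simp
  then have kK: "Rseq l L L' m w (k - 1) + 1 \<le> Sseq l L L' m w (k - 1)" "Sseq l L L' m w (k - 1) < ereal T'"
    unfolding K_def Rk_def Sk_def by auto
  have hb: "ereal h < Sseq l L L' m w (k - 1) - ereal Tm"
    using bad ha k0 unfolding Sk_def by simp
  have "Sseq l L L' m w (k - 1) \<ge> 0" using Sseq_ge_Rseq Rseq_nonneg order_trans by blast
  then obtain s where s: "Sseq l L L' m w (k - 1) = ereal s" using kK(2) by (cases "Sseq l L L' m w (k - 1)") auto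
  show ?thesis unfolding k_def[symmetric] using s kK hb by (intro exI[of _ s]) auto
qed

lemma sum_ind_card: "finite A \<Longrightarrow> (\<Sum>x\<in>A. if P x then (1::real) else 0) = real (card {x\<in>A. P x})"
proof -
  assume "finite A"
  then have "(\<Sum>x\<in>A. (of_bool (P x) :: real)) = real (card (A \<inter> {x. P x}))" by simp
  moreover have "A \<inter> {x. P x} = {x\<in>A. P x}" by auto
  ultimately show ?thesis by (simp add: of_bool_def)
qed

lemma tele:
  fixes g :: "nat \<Rightarrow> real"
  assumes "mono g" "\<And>j. g j \<ge> 0"
  shows "(\<Sum>m<n. g (m + a) - g m) \<le> real a * g (n + a)"
  using assms
proof (induction a arbitrary: g)
  case 0 then show ?case by simp
next
  case (Suc a)
  have m2: "mono (\<lambda>j. g (Suc j))" using Suc.prems(1) by (auto simp: mono_def)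
  have IH: "(\<Sum>m<n. g (Suc (m + a)) - g (Suc m)) \<le> real a * g (Suc (n + a))"
    using Suc.IH[OF m2] Suc.prems(2) by simp
  have "(\<Sum>m<n. g (m + Suc a) - g m) = (\<Sum>m<n. g (Suc (m + a)) - g (Suc m)) + (\<Sum>m<n. g (Suc m) - g m)"
    by (simp add: sum.distrib[symmetric])
  also have "(\<Sum>m<n. g (Suc m) - g m) = g n - g 0" by (rule sum_lessThan_telescope)
  also have "g n \<le> g (n + Suc a)" using Suc.prems(1) by (simp add: monoD)
  then have "g n - g 0 \<le> g (n + Suc a)" using Suc.prems(2)[of 0] by simp
  finally show ?case using IH by (simp add: algebra_simps)
qed

lemma markov_count:
  fixes x :: "nat \<Rightarrow> real"
  assumes "finite A" "\<And>m. m \<in> A \<Longrightarrow> x m \<ge> 0" "H > 0"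
  shows "real (card {m\<in>A. x m > H}) * H \<le> (\<Sum>m\<in>A. x m)"
proof -
  have "real (card {m\<in>A. x m > H}) * H = (\<Sum>m\<in>{m\<in>A. x m > H}. H)" by simp
  also have "\<dots> \<le> (\<Sum>m\<in>{m\<in>A. x m > H}. x m)" by (rule sum_mono) auto
  also have "\<dots> \<le> (\<Sum>m\<in>A. x m)" using assms by (intro sum_mono2) auto
  finally show ?thesis .
qed

lemma count_m:
  fixes \<kappa> :: "nat \<Rightarrow> nat"
  assumes "finite I" "finite D"
    and coll: "\<And>i i'. i \<in> I \<Longrightarrow> i' \<in> I \<Longrightarrow> i < i' \<Longrightarrow> \<kappa> i = \<kappa> i' \<Longrightarrow> i \<in> D"
  shows "card I \<le> card (\<kappa> ` I) + card D"
proof -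
  define N where "N = {i\<in>I. \<forall>i'\<in>I. i < i' \<longrightarrow> \<kappa> i' \<noteq> \<kappa> i}"
  have inj: "inj_on \<kappa> N"
  proof (rule inj_onI)
    fix i j assume "i \<in> N" "j \<in> N" "\<kappa> i = \<kappa> j"
    then show "i = j" unfolding N_def
      by (cases i j rule: linorder_cases) auto
  qed
  have "I \<subseteq> N \<union> D" using coll unfolding N_def by auto
  moreover have "finite N" using assms(1) unfolding N_def by simp
  ultimately have "card I \<le> card (N \<union> D)" using assms by (intro card_mono) auto
  also have "\<dots> \<le> card N + card D" by (rule card_Un_le)
  also have "card N = card (\<kappa> ` N)" using card_image[OF inj] by simp
  also have "card (\<kappa> ` N) \<le> card (\<kappa> ` I)" using assms(1) unfolding N_def by (intro card_mono) auto
  finally show ?thesis by simp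
qed



theorem proposition2p1:
  fixes l :: "'a::euclidean_space" and w :: "real \<Rightarrow> 'a"
    and R L L' :: real
  assumes "R > 0"
    and "norm l = 1"
    and "L' > R"
    and "L = 3 * L'"
    and "continuous_on {0..} w"
    and "w 0 = 0"
    and "Limsup at_top (\<lambda>t. ereal (l \<bullet> w t / t)) > 0"
  shows "\<exists>h::nat. h \<ge> 1 \<and> (\<forall>\<alpha>::nat. \<alpha> \<ge> 2 \<longrightarrow>
     Limsup sequentially (\<lambda>M::nat. ereal ((1 / real (M + 1)) *
        (\<Sum>m = 0..M. if h_alpha l L L' m \<alpha> w \<le> ereal (real h) then 1 else 0)))
       \<ge> 1 / 3)"
proof (rule ccontr)
  assume neg: "\<not> ?thesis"
  have L: "L > 0" using assms by simp
  obtain c where c0: "c > 0" and freq: "\<And>N. \<exists>t\<ge>N. c * t < l \<bullet> w t"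
  proof -
    have "\<not> (0 \<ge> Limsup at_top (\<lambda>t. ereal (l \<bullet> w t / t)))" using assms(7) by simp
    then obtain y where y: "y > 0" and ne: "\<not> eventually (\<lambda>t. y > ereal (l \<bullet> w t / t)) at_top"
      unfolding Limsup_le_iff by auto
    obtain c where c: "0 < ereal c" "ereal c < y" using ereal_dense2[OF y] by auto
    have "\<exists>t\<ge>N. c * t < l \<bullet> w t" for N
    proof -
      from ne obtain t where t: "t \<ge> max N 1" "\<not> y > ereal (l \<bullet> w t / t)"
        unfolding eventually_at_top_linorder by (meson)
      then have "ereal c < ereal (l \<bullet> w t / t)" using c by (meson less_le_trans not_less)
      then have "c < l \<bullet> w t / t" by simp
      moreover have "t > 0" using t by simp
      ultimately have "c * t < l \<bullet> w t" by (simp add: pos_less_divide_eq)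
      then show ?thesis using t by (intro exI[of _ t]) auto
    qed
    then show ?thesis using that c by auto
  qed
  define K where "K = nat \<lceil>6 * L / c\<rceil> + 2"
  have K2: "K \<ge> 2" unfolding K_def by simp
  have Kc: "real K \<ge> 6 * L / c + 2" unfolding K_def by linarith
  define P where "P = (\<lambda>h \<alpha>. Limsup sequentially (\<lambda>M::nat. ereal ((1 / real (M + 1)) *
        (\<Sum>m = 0..M. if h_alpha l L L' m \<alpha> w \<le> ereal (real h) then 1 else 0))))"
  have ex: "\<exists>\<alpha>. \<alpha> \<ge> 2 \<and> \<not> (1/3 \<le> P h \<alpha>)" if "h \<ge> 1" for h
    using neg that unfolding P_def by auto
  define af where "af = (\<lambda>h. SOME \<alpha>. \<alpha> \<ge> 2 \<and> \<not> (1/3 \<le> P h \<alpha>))"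
  have af: "af h \<ge> 2 \<and> \<not> (1/3 \<le> P h (af h))" if "h \<ge> 1" for h
    unfolding af_def using someI_ex[OF ex[OF that]] .
  define hs where "hs = rec_nat (1::nat) (\<lambda>i x. max x (af x * K))"
  have hs0: "hs 0 = 1" and hsS: "\<And>i. hs (Suc i) = max (hs i) (af (hs i) * K)"
    unfolding hs_def by simp_all
  have hs1: "hs i \<ge> 1" for i by (induction i) (simp_all add: hs0 hsS)
  have hsmono: "hs i \<le> hs j" if "i \<le> j" for i j
    using lift_Suc_mono_le[of hs, OF _ that] hsS by simp
  define \<alpha> where "\<alpha> = (\<lambda>i. af (hs i))"
  have \<alpha>2: "\<alpha> i \<ge> 2" for i using af[OF hs1[of i]] unfolding \<alpha>_def by simp
  have hsK: "real (hs (Suc i)) \<ge> real (\<alpha> i) * real K" for i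
    unfolding \<alpha>_def hsS by (simp flip: of_nat_mult)
  define freqf where "freqf = (\<lambda>i M. (1 / real (M + 1)) *
        (\<Sum>m = 0..M. if h_alpha l L L' m (\<alpha> i) w \<le> ereal (real (hs i)) then 1 else (0::real)))"
  have ev: "eventually (\<lambda>M. \<forall>i\<in>{..<K}. ereal (freqf i M) < 1/3) sequentially"
  proof (rule eventually_ball_finite)
    show "\<forall>i\<in>{..<K}. eventually (\<lambda>M. ereal (freqf i M) < 1/3) sequentially"
    proof
      fix i
      have "\<not> (1/3 \<le> P (hs i) (\<alpha> i))" using af[OF hs1[of i]] unfolding \<alpha>_def by simp
      then have "P (hs i) (\<alpha> i) < 1/3" by simp
      then show "eventually (\<lambda>M. ereal (freqf i M) < 1/3) sequentially"
        unfolding P_def freqf_def by (rule Limsup_lessD)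
    qed
  qed simp
  then obtain M0 where M0: "\<And>M i. M \<ge> M0 \<Longrightarrow> i < K \<Longrightarrow> ereal (freqf i M) < 1/3"
    unfolding eventually_sequentially by blast
  define A where "A = (\<Sum>i<K. \<alpha> i)"
  have \<alpha>A: "\<alpha> i \<le> A" if "i < K" for i unfolding A_def using that by (intro member_le_sum) auto
  define M1 where "M1 = max M0 (A + 1)"
  obtain t where t1: "t \<ge> max 1 (L * real (A + M1 + 2) / c)" and ft: "c * t < l \<bullet> w t"
    using freq by blast
  have t1': "t \<ge> 1" using t1 by simp
  have ct: "c * t \<ge> L * real (A + M1 + 2)" using t1 c0 by (simp add: field_simps)
  define J0 where "J0 = nat \<lfloor>l \<bullet> w t / L\<rfloor>"
  have fL: "l \<bullet> w t / L > real (A + M1 + 2)" using ct ft L by (simp add: field_simps)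
  have J0ge: "J0 \<ge> A + M1 + 2" unfolding J0_def using fL by linarith
  have J0L: "real J0 * L \<le> l \<bullet> w t" "l \<bullet> w t < (real J0 + 1) * L"
  proof -
    have "real J0 \<le> l \<bullet> w t / L" "l \<bullet> w t / L < real J0 + 1" unfolding J0_def using fL by linarith+
    then show "real J0 * L \<le> l \<bullet> w t" "l \<bullet> w t < (real J0 + 1) * L" using L by (simp_all add: field_simps)
  qed
  define M where "M = J0 - A - 1"
  have MJ: "M + A + 1 = J0" and MM: "M \<ge> M1" using J0ge unfolding M_def by auto
  have MA: "M \<ge> A + 1" "M \<ge> M0" using MM unfolding M1_def by auto
  define T where "T = (\<lambda>j::nat. real_of_ereal (level_time l w (real j * L)))"
  have Tfin: "level_time l w (real j * L) = ereal (T j) \<and> 0 \<le> T j \<and> T j \<le> t" if "j \<le> J0" for j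
  proof -
    have "real j * L \<le> real J0 * L" using that L by simp
    then have a: "level_time l w (real j * L) \<le> ereal t" using J0L t1' by (intro level_time_le) auto
    have b: "level_time l w (real j * L) \<ge> 0" by (rule level_time_nonneg)
    from a b show ?thesis unfolding T_def by (cases "level_time l w (real j * L)") auto
  qed
  have Tmono: "T i \<le> T j" if "i \<le> j" "j \<le> J0" for i j
  proof -
    have "level_time l w (real i * L) \<le> level_time l w (real j * L)"
      using that L by (intro level_time_mono) simp
    then show ?thesis using Tfin[of i] Tfin[of j] that by simp
  qed
  define g where "g = (\<lambda>j. T (min j J0))"
  have gmono: "mono g" unfolding g_def mono_def using Tmono by simp
  have gnn: "g j \<ge> 0" for j unfolding g_def using Tfin by simp
  define bad where "bad = (\<lambda>i m. \<not> (h_alpha l L L' m (\<alpha> i) w \<le> ereal (real (hs i))))"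
  define \<kappa> where "\<kappa> = (\<lambda>m i. k_alpha l L L' m (\<alpha> i) w - 1)"
  have BF: "\<exists>s. Sseq l L L' m w (\<kappa> m i) = ereal s \<and> s < T (m + \<alpha> i) \<and> real (hs i) < s - T m
     \<and> Rseq l L L' m w (\<kappa> m i) + 1 \<le> ereal s" if "i < K" "m \<le> M" "bad i m" for i m
  proof -
    have j: "m + \<alpha> i \<le> J0" using \<alpha>A[OF that(1)] that(2) MJ by simp
    show ?thesis unfolding \<kappa>_def
      using bad_fact[OF L _ _ _ that(3)[unfolded bad_def], of "T (m + \<alpha> i)" "T m"] Tfin[OF j] Tfin[of m] j
      by simp
  qed
  define I where "I = (\<lambda>m. {i\<in>{..<K}. bad i m})"
  define D where "D = (\<lambda>m. {i\<in>{..<K}. T (m + \<alpha> i) - T m > real (hs (Suc i))})"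
  have cm: "card (I m) \<le> card (\<kappa> m ` I m) + card (D m)" if mM: "m \<le> M" for m
  proof (rule count_m)
    show "finite (I m)" "finite (D m)" unfolding I_def D_def by auto
    fix i i' assume ii: "i \<in> I m" "i' \<in> I m" "i < i'" "\<kappa> m i = \<kappa> m i'"
    have i1: "i < K" "bad i m" and i2: "i' < K" "bad i' m" using ii(1,2) unfolding I_def by auto
    obtain s where s: "Sseq l L L' m w (\<kappa> m i) = ereal s" "s < T (m + \<alpha> i)"
      using BF[OF i1(1) mM i1(2)] by blast
    obtain s' where s': "Sseq l L L' m w (\<kappa> m i') = ereal s'" "real (hs i') < s' - T m"
      using BF[OF i2(1) mM i2(2)] by blast
    have "s = s'" using s s' ii(4) by simp
    moreover have "real (hs (Suc i)) \<le> real (hs i')" using hsmono[of "Suc i" i'] ii(3) by simp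
    ultimately show "i \<in> D m" using s s' ii(1) unfolding D_def I_def by auto
  qed
  have sum1: "(\<Sum>m\<le>M. card (\<kappa> m ` I m)) \<le> nat \<lfloor>t\<rfloor> + 1"
  proof -
    define G where "G = {(m,n). Rseq l L L' m w n + 1 \<le> Sseq l L L' m w n \<and> Sseq l L L' m w n \<le> ereal t}"
    have G: "finite G" "card G \<le> nat \<lfloor>t\<rfloor> + 1" using G_card[OF L, of l L' w t] unfolding G_def by auto
    have sub: "(SIGMA m:{..M}. \<kappa> m ` I m) \<subseteq> G"
    proof
      fix p assume "p \<in> (SIGMA m:{..M}. \<kappa> m ` I m)"
      then obtain m i where p: "p = (m, \<kappa> m i)" "m \<le> M" "i \<in> I m" by auto
      then have i: "i < K" "bad i m" unfolding I_def by auto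
      obtain s where s: "Sseq l L L' m w (\<kappa> m i) = ereal s" "s < T (m + \<alpha> i)"
         "Rseq l L L' m w (\<kappa> m i) + 1 \<le> ereal s"
        using BF[OF i(1) p(2) i(2)] by blast
      have j: "m + \<alpha> i \<le> J0" using \<alpha>A[OF i(1)] p(2) MJ by simp
      have "s \<le> t" using s(2) Tfin[OF j] by simp
      then show "p \<in> G" unfolding G_def p(1) using s by simp
    qed
    have "(\<Sum>m\<le>M. card (\<kappa> m ` I m)) = card (SIGMA m:{..M}. \<kappa> m ` I m)"
      unfolding I_def by (subst card_SigmaI) auto
    also have "\<dots> \<le> card G" using G(1) sub by (rule card_mono)
    finally show ?thesis using G(2) by simp
  qed
  have sum2: "(\<Sum>m\<le>M. real (card (D m))) \<le> t"
  proof -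
    have "(\<Sum>m\<le>M. real (card (D m))) =
        (\<Sum>m\<le>M. \<Sum>i<K. if T (m + \<alpha> i) - T m > real (hs (Suc i)) then 1 else 0)"
      unfolding D_def by (simp add: sum_ind_card)
    also have "\<dots> = (\<Sum>i<K. \<Sum>m\<le>M. if T (m + \<alpha> i) - T m > real (hs (Suc i)) then 1 else 0)"
      by (rule sum.swap)
    also have "\<dots> = (\<Sum>i<K. real (card {m\<in>{..M}. T (m + \<alpha> i) - T m > real (hs (Suc i))}))"
      by (simp add: sum_ind_card)
    also have "\<dots> \<le> (\<Sum>i<K. t / real K)"
    proof (rule sum_mono)
      fix i assume "i \<in> {..<K}"
      then have iK: "i < K" by simp
      define x where "x = (\<lambda>m. T (m + \<alpha> i) - T m)"
      have xg: "x m = g (m + \<alpha> i) - g m" if "m \<in> {..M}" for m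
        using that \<alpha>A[OF iK] MJ unfolding x_def g_def by simp
      have xnn: "x m \<ge> 0" if "m \<in> {..M}" for m
        using xg[OF that] gmono by (simp add: monoD)
      have hpos: "real (hs (Suc i)) > 0" using hs1[of "Suc i"] by simp
      have "real (card {m\<in>{..M}. x m > real (hs (Suc i))}) * real (hs (Suc i)) \<le> (\<Sum>m\<in>{..M}. x m)"
        by (rule markov_count[OF _ xnn hpos]) auto
      also have "(\<Sum>m\<in>{..M}. x m) = (\<Sum>m<Suc M. g (m + \<alpha> i) - g m)"
        using xg by (simp add: lessThan_Suc_atMost)
      also have "\<dots> \<le> real (\<alpha> i) * g (Suc M + \<alpha> i)" by (rule tele[OF gmono gnn])
      also have "g (Suc M + \<alpha> i) \<le> t" unfolding g_def using Tfin[of "min (Suc M + \<alpha> i) J0"] by simp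
      then have "real (\<alpha> i) * g (Suc M + \<alpha> i) \<le> real (\<alpha> i) * t" by (simp add: mult_left_mono)
      finally have a: "real (card {m\<in>{..M}. x m > real (hs (Suc i))}) * real (hs (Suc i)) \<le> real (\<alpha> i) * t" .
      have "real (card {m\<in>{..M}. x m > real (hs (Suc i))}) * (real (\<alpha> i) * real K)
          \<le> real (card {m\<in>{..M}. x m > real (hs (Suc i))}) * real (hs (Suc i))"
        using hsK[of i] by (simp add: mult_left_mono)
      with a have "real (\<alpha> i) * (real (card {m\<in>{..M}. x m > real (hs (Suc i))}) * real K) \<le> real (\<alpha> i) * t"
        by (simp add: algebra_simps)
      then have "real (card {m\<in>{..M}. x m > real (hs (Suc i))}) * real K \<le> t"
        using \<alpha>2[of i] by (simp add: mult_le_cancel_left_pos)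
      then show "real (card {m\<in>{..M}. T (m + \<alpha> i) - T m > real (hs (Suc i))}) \<le> t / real K"
        using K2 unfolding x_def by (simp add: field_simps)
    qed
    also have "\<dots> = t" using K2 by simp
    finally show ?thesis .
  qed
  have third: "(1/3::ereal) = ereal (1/3)" by (simp add: divide_ereal_def one_ereal_def)
  have sum3: "(\<Sum>m\<le>M. real (card (I m))) \<ge> real K * (2 * real (M + 1) / 3)"
  proof -
    have "(\<Sum>m\<le>M. real (card (I m))) = (\<Sum>m\<le>M. \<Sum>i<K. if bad i m then 1 else 0)"
      unfolding I_def by (simp add: sum_ind_card)
    also have "\<dots> = (\<Sum>i<K. \<Sum>m\<le>M. if bad i m then 1 else 0)" by (rule sum.swap)
    also have "\<dots> \<ge> (\<Sum>i<K. 2 * real (M + 1) / 3)"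
    proof (rule sum_mono)
      fix i assume "i \<in> {..<K}"
      then have fr: "ereal (freqf i M) < 1/3" using M0 MA by simp
      define X where "X = (\<Sum>m\<le>M. if h_alpha l L L' m (\<alpha> i) w \<le> ereal (real (hs i)) then 1 else (0::real))"
      have "freqf i M = X / real (M + 1)"
        unfolding freqf_def X_def by (simp add: atLeast0AtMost)
      then have "X / real (M + 1) < 1/3" using fr third by simp
      then have X: "X < real (M + 1) / 3" by (simp add: field_simps)
      have "(\<Sum>m\<le>M. if bad i m then 1 else (0::real)) + X = (\<Sum>m\<le>M. 1)"
        unfolding X_def bad_def sum.distrib[symmetric] by (rule sum.cong) auto
      then have "(\<Sum>m\<le>M. if bad i m then 1 else (0::real)) = real (M + 1) - X" by simp
      with X show "2 * real (M + 1) / 3 \<le> (\<Sum>m\<le>M. if bad i m then 1 else (0::real))" by simp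
    qed
    finally show ?thesis by simp
  qed
  have "(\<Sum>m\<le>M. real (card (I m))) \<le> (\<Sum>m\<le>M. real (card (\<kappa> m ` I m))) + (\<Sum>m\<le>M. real (card (D m)))"
    unfolding sum.distrib[symmetric] using cm by (intro sum_mono) (simp flip: of_nat_add)
  also have "(\<Sum>m\<le>M. real (card (\<kappa> m ` I m))) \<le> real (nat \<lfloor>t\<rfloor> + 1)"
    using sum1 by (simp flip: of_nat_sum)
  also have "real (nat \<lfloor>t\<rfloor> + 1) \<le> t + 1" using t1' by linarith
  finally have tot: "real K * (2 * real (M + 1) / 3) \<le> 2 * t + 1" using sum2 sum3 by linarith
  have j1: "real J0 + 1 \<le> 2 * real (M + 1)" unfolding MJ[symmetric] using MA by simp
  have "c * t < (real J0 + 1) * L" using ft J0L by linarith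
  also have "(real J0 + 1) * L \<le> 2 * real (M + 1) * L" using L j1 by (simp add: mult_right_mono)
  finally have tb: "t < 2 * real (M + 1) * L / c" using c0 by (simp add: field_simps)
  have "real K * (2 * real (M + 1) / 3) \<ge> (6 * L / c + 2) * (2 * real (M + 1) / 3)"
    using Kc by (intro mult_right_mono) auto
  moreover have "(6 * L / c + 2) * (2 * real (M + 1) / 3) = 2 * (2 * real (M + 1) * L / c) + 4 * real (M + 1) / 3"
    by (simp add: field_simps)
  moreover have "real (M + 1) \<ge> 1" by simp
  moreover have aux: "\<And>a b x y t::real. a \<le> b \<Longrightarrow> a = 2*x + 4*y/3 \<Longrightarrow> 1 \<le> y \<Longrightarrow> b \<le> 2*t+1 \<Longrightarrow> t < x \<Longrightarrow> False"
    by linarith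
  ultimately show False using tot tb by blast
qed

end
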